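(* Let $s\ge 1$ and $n\ge 2$ be integers and let $A=(a_{i,j})$ be a real $s\times s$ matrix with all entries non-negative. Then \[ s^{\,n-1}\,\mathrm{tr}(A^n)\ \ge\ \big(\mathrm{tr}(A)\big)^n. \] Moreover, for $n=2$ equality holds if and only if $a_{k,k}=a_{1,1}$ for all $k=2,\dots,s$ and $a_{i,j}a_{j,i}=0$ for all $i\ne j$; and for $n\ge 3$, equality $s^{n-1}\mathrm{tr}(A^n)=(\mathrm{tr}A)^n$ implies $a_{k,k}=a_{1,1}$ for all $k=2,\dots,s$. *)

theory Defs
  imports "Jordan_Normal_Form.Matrix"
begin

definition mat_trace :: "'a :: comm_monoid_add mat \<Rightarrow> 'a" where
  "mat_trace A = (\<Sum>i<dim_row A. A $$ (i, i))"

end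

theory Submission
  imports Defs
begin

lemma tangent_weak:
  fixes x m :: real
  assumes "x \<ge> 0" "m \<ge> 0"
  shows "x ^ n \<ge> m ^ n + real n * m ^ (n - 1) * (x - m)"
proof (induction n)
  case 0 then show ?case by simp
next
  case (Suc n)
  have "x ^ Suc n = x * x ^ n" by simp
  also have "\<dots> \<ge> x * (m ^ n + real n * m ^ (n - 1) * (x - m))"
    using Suc assms by (intro mult_left_mono) auto
  finally have h: "x ^ Suc n \<ge> x * (m ^ n + real n * m ^ (n - 1) * (x - m))" .
  show ?case
  proof (cases n)
    case 0 then show ?thesis by simp
  next
    case (Suc k)
    have e: "x * (m ^ n + real n * m ^ (n - 1) * (x - m)) =
      m ^ Suc n + real (Suc n) * m ^ n * (x - m) + real n * m ^ (n - 1) * (x - m)^2"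
      using Suc by (simp add: power2_eq_square algebra_simps)
    have "real n * m ^ (n - 1) * (x - m)^2 \<ge> 0" using assms by simp
    then show ?thesis using h e by simp
  qed
qed

lemma tangent_strict:
  fixes x m :: real
  assumes "x \<ge> 0" "m \<ge> 0" "n \<ge> 2" "x \<noteq> m"
  shows "x ^ n > m ^ n + real n * m ^ (n - 1) * (x - m)"
proof -
  obtain k where n: "n = Suc k" and k: "k \<ge> 1" using assms(3) by (cases n) auto
  have h: "x ^ Suc k \<ge> x * (m ^ k + real k * m ^ (k - 1) * (x - m))"
    using tangent_weak[OF assms(1,2), of k] assms by (simp add: mult_left_mono)
  have e: "x * (m ^ k + real k * m ^ (k - 1) * (x - m)) =
      m ^ Suc k + real (Suc k) * m ^ k * (x - m) + real k * m ^ (k - 1) * (x - m)^2"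
    using k by (cases k) (auto simp add: power2_eq_square algebra_simps)
  show ?thesis
  proof (cases "m = 0")
    case True
    then have "x > 0" using assms by auto
    then show ?thesis using True n k by (simp add: power_0_left)
  next
    case False
    then have "real k * m ^ (k - 1) * (x - m)^2 > 0" using assms k by simp
    then show ?thesis using h e n by simp
  qed
qed

lemma power_mean:
  fixes x :: "nat \<Rightarrow> real"
  assumes s: "s \<ge> 1" and n: "n \<ge> 2" and nn: "\<forall>i<s. x i \<ge> 0"
  shows "real s ^ (n - 1) * (\<Sum>i<s. x i ^ n) \<ge> (\<Sum>i<s. x i) ^ n"
    and "real s ^ (n - 1) * (\<Sum>i<s. x i ^ n) = (\<Sum>i<s. x i) ^ n \<Longrightarrow> \<forall>i<s. x i = x 0"
proof -
  define T where "T = (\<Sum>i<s. x i)"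
  define m where "m = T / real s"
  have T0: "T \<ge> 0" unfolding T_def using nn by (intro sum_nonneg) auto
  have m0: "m \<ge> 0" unfolding m_def using T0 by simp
  have sm: "real s * m = T" unfolding m_def using s by simp
  define g where "g i = x i ^ n - (m ^ n + real n * m ^ (n - 1) * (x i - m))" for i
  have g0: "\<forall>i<s. g i \<ge> 0" unfolding g_def using tangent_weak nn m0 by auto
  have "(\<Sum>i<s. g i) = (\<Sum>i<s. x i ^ n) - real s * m ^ n - real n * m ^ (n - 1) * (T - real s * m)"
  proof -
    have a: "(\<Sum>i<s. x i - m) = T - real s * m" unfolding T_def by (simp add: sum_subtractf)
    have "(\<Sum>i<s. g i) = (\<Sum>i<s. x i ^ n) - (\<Sum>i<s. m ^ n + real n * m ^ (n - 1) * (x i - m))"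
      unfolding g_def by (rule sum_subtractf)
    also have "(\<Sum>i<s. m ^ n + real n * m ^ (n - 1) * (x i - m)) = real s * m ^ n + real n * m ^ (n - 1) * (\<Sum>i<s. x i - m)"
      by (simp add: sum.distrib sum_distrib_left)
    finally show ?thesis using a by simp
  qed
  then have sg: "(\<Sum>i<s. g i) = (\<Sum>i<s. x i ^ n) - real s * m ^ n" using sm by simp
  have key: "real s ^ (n - 1) * (real s * m ^ n) = T ^ n"
  proof -
    have "real s ^ (n - 1) * (real s * m ^ n) = real s ^ n * m ^ n"
      using n by (cases n) auto
    also have "\<dots> = T ^ n" using sm by (simp add: power_mult_distrib[symmetric])
    finally show ?thesis .
  qed
  have "(\<Sum>i<s. g i) \<ge> 0" using g0 by (intro sum_nonneg) auto
  then have "(\<Sum>i<s. x i ^ n) \<ge> real s * m ^ n" using sg by simp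
  then have "real s ^ (n - 1) * (\<Sum>i<s. x i ^ n) \<ge> real s ^ (n - 1) * (real s * m ^ n)"
    by (simp add: mult_left_mono)
  then show "real s ^ (n - 1) * (\<Sum>i<s. x i ^ n) \<ge> (\<Sum>i<s. x i) ^ n" using key T_def by simp
  assume eq: "real s ^ (n - 1) * (\<Sum>i<s. x i ^ n) = (\<Sum>i<s. x i) ^ n"
  have "real s ^ (n - 1) > 0" using s by simp
  moreover have "real s ^ (n - 1) * (\<Sum>i<s. x i ^ n) = real s ^ (n - 1) * (real s * m ^ n)"
    using eq key T_def by simp
  ultimately have "(\<Sum>i<s. x i ^ n) = real s * m ^ n" using s by simp
  then have "(\<Sum>i<s. g i) = 0" using sg by simp
  then have "\<forall>i\<in>{..<s}. g i = 0" using g0 by (subst sum_nonneg_eq_0_iff[symmetric]) auto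
  then have all: "\<forall>i<s. x i = m" using tangent_strict nn m0 n unfolding g_def by force
  show "\<forall>i<s. x i = x 0" using all s by auto
qed

lemma diag_pow:
  fixes A :: "real mat"
  assumes A: "A \<in> carrier_mat s s" and nn: "\<forall>i<s. \<forall>j<s. A $$ (i, j) \<ge> 0"
  shows "\<forall>i<s. \<forall>j<s. (A ^\<^sub>m k) $$ (i, j) \<ge> 0 \<and> (A ^\<^sub>m k) $$ (i, i) \<ge> (A $$ (i, i)) ^ k"
proof (induction k)
  case 0 then show ?case using A by auto
next
  case (Suc k)
  show ?case
  proof (intro allI impI conjI)
    fix i j assume i: "i < s" and j: "j < s"
    have ex: "\<And>j. j < s \<Longrightarrow> (A ^\<^sub>m Suc k) $$ (i, j) = (\<Sum>l<s. (A ^\<^sub>m k) $$ (i, l) * A $$ (l, j))"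
      using A i by (simp add: scalar_prod_def atLeast0LessThan)
    have tn: "\<forall>l\<in>{..<s}. (A ^\<^sub>m k) $$ (i, l) * A $$ (l, j) \<ge> 0" using Suc.IH nn i j by auto
    show "(A ^\<^sub>m Suc k) $$ (i, j) \<ge> 0" unfolding ex[OF j] using tn by (intro sum_nonneg) auto
    have tn2: "\<forall>l\<in>{..<s}. (A ^\<^sub>m k) $$ (i, l) * A $$ (l, i) \<ge> 0" using Suc.IH nn i by auto
    have "(A ^\<^sub>m k) $$ (i, i) * A $$ (i, i) \<le> (\<Sum>l<s. (A ^\<^sub>m k) $$ (i, l) * A $$ (l, i))"
      using i tn2 by (intro member_le_sum) auto
    moreover have "(A $$ (i, i)) ^ k * A $$ (i, i) \<le> (A ^\<^sub>m k) $$ (i, i) * A $$ (i, i)"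
      using Suc.IH nn i by (intro mult_right_mono) auto
    ultimately show "(A ^\<^sub>m Suc k) $$ (i, i) \<ge> (A $$ (i, i)) ^ Suc k"
      using ex[OF i] by (simp add: mult.commute)
  qed
qed



theorem lemma2p12:
  fixes A :: "real mat" and s n :: nat
  assumes "s \<ge> 1" and "n \<ge> 2" and "A \<in> carrier_mat s s"
    and "\<forall>i<s. \<forall>j<s. A $$ (i, j) \<ge> 0"
  shows "real s ^ (n - 1) * mat_trace (A ^\<^sub>m n) \<ge> (mat_trace A) ^ n
    \<and> (n = 2 \<longrightarrow>
         (real s ^ (n - 1) * mat_trace (A ^\<^sub>m n) = (mat_trace A) ^ n \<longleftrightarrow>
           (\<forall>k<s. A $$ (k, k) = A $$ (0, 0)) \<and>
           (\<forall>i<s. \<forall>j<s. i \<noteq> j \<longrightarrow> A $$ (i, j) * A $$ (j, i) = 0)))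
    \<and> (n \<ge> 3 \<longrightarrow>
         real s ^ (n - 1) * mat_trace (A ^\<^sub>m n) = (mat_trace A) ^ n \<longrightarrow>
           (\<forall>k<s. A $$ (k, k) = A $$ (0, 0)))"
proof -
  note s = assms(1) and n = assms(2) and A = assms(3) and nn = assms(4)
  define d where "d i = A $$ (i, i)" for i
  have dnn: "\<forall>i<s. d i \<ge> 0" using nn unfolding d_def by auto
  have T: "mat_trace A = (\<Sum>i<s. d i)" using A unfolding mat_trace_def d_def by simp
  have trn: "mat_trace (A ^\<^sub>m k) = (\<Sum>i<s. (A ^\<^sub>m k) $$ (i, i))" for k
    using A unfolding mat_trace_def by simp
  have geD: "mat_trace (A ^\<^sub>m n) \<ge> (\<Sum>i<s. d i ^ n)"
    unfolding trn d_def using diag_pow[OF A nn, of n] by (intro sum_mono) auto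
  have pm1: "real s ^ (n - 1) * (\<Sum>i<s. d i ^ n) \<ge> (\<Sum>i<s. d i) ^ n"
    using power_mean(1)[OF s n dnn] .
  have ge2: "real s ^ (n - 1) * mat_trace (A ^\<^sub>m n) \<ge> real s ^ (n - 1) * (\<Sum>i<s. d i ^ n)"
    using geD by (intro mult_left_mono) auto
  have part1: "real s ^ (n - 1) * mat_trace (A ^\<^sub>m n) \<ge> (mat_trace A) ^ n"
    unfolding T using pm1 ge2 by linarith
  have part3: "real s ^ (n - 1) * mat_trace (A ^\<^sub>m n) = (mat_trace A) ^ n \<longrightarrow>
           (\<forall>k<s. A $$ (k, k) = A $$ (0, 0))"
  proof
    assume eq: "real s ^ (n - 1) * mat_trace (A ^\<^sub>m n) = (mat_trace A) ^ n"
    then have "real s ^ (n - 1) * (\<Sum>i<s. d i ^ n) = (\<Sum>i<s. d i) ^ n"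
      using pm1 ge2 unfolding T by linarith
    then have "\<forall>i<s. d i = d 0" by (rule power_mean(2)[OF s n dnn])
    then show "\<forall>k<s. A $$ (k, k) = A $$ (0, 0)" unfolding d_def .
  qed
  have part2: "n = 2 \<longrightarrow>
         (real s ^ (n - 1) * mat_trace (A ^\<^sub>m n) = (mat_trace A) ^ n \<longleftrightarrow>
           (\<forall>k<s. A $$ (k, k) = A $$ (0, 0)) \<and>
           (\<forall>i<s. \<forall>j<s. i \<noteq> j \<longrightarrow> A $$ (i, j) * A $$ (j, i) = 0))"
  proof
    assume n2: "n = 2"
    define p where "p i l = A $$ (i, l) * A $$ (l, i)" for i l
    have pnn: "\<forall>i<s. \<forall>l<s. p i l \<ge> 0" using nn unfolding p_def by auto
    define Off where "Off = (\<Sum>i<s. \<Sum>l\<in>{..<s} - {i}. p i l)"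
    have sq: "A ^\<^sub>m 2 = A * A" using A by (simp add: numeral_2_eq_2)
    have diag2: "(A ^\<^sub>m 2) $$ (i, i) = (\<Sum>l<s. p i l)" if "i < s" for i
      unfolding sq p_def using A that by (simp add: scalar_prod_def atLeast0LessThan)
    have split: "(\<Sum>l<s. p i l) = d i ^ 2 + (\<Sum>l\<in>{..<s} - {i}. p i l)" if "i < s" for i
      using that by (subst sum.remove[of _ i]) (auto simp: p_def d_def power2_eq_square)
    have tr2: "mat_trace (A ^\<^sub>m 2) = (\<Sum>i<s. d i ^ 2) + Off"
      unfolding trn Off_def using diag2 split by (simp add: sum.distrib[symmetric])
    have O0: "Off \<ge> 0" unfolding Off_def using pnn by (intro sum_nonneg) auto
    have pm2: "real s * (\<Sum>i<s. d i ^ 2) \<ge> (\<Sum>i<s. d i) ^ 2"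
      using power_mean(1)[OF s, of 2] dnn by simp
    have Oiff: "Off = 0 \<longleftrightarrow> (\<forall>i<s. \<forall>j<s. i \<noteq> j \<longrightarrow> p i j = 0)"
    proof -
      have inner: "\<forall>i\<in>{..<s}. (\<Sum>l\<in>{..<s} - {i}. p i l) \<ge> 0" using pnn by (auto intro: sum_nonneg)
      have "Off = 0 \<longleftrightarrow> (\<forall>i\<in>{..<s}. (\<Sum>l\<in>{..<s} - {i}. p i l) = 0)"
        unfolding Off_def using inner by (intro sum_nonneg_eq_0_iff) auto
      also have "\<dots> \<longleftrightarrow> (\<forall>i\<in>{..<s}. \<forall>l\<in>{..<s} - {i}. p i l = 0)"
        using pnn by (intro ball_cong refl sum_nonneg_eq_0_iff) auto
      finally show ?thesis by auto
    qed
    show "real s ^ (n - 1) * mat_trace (A ^\<^sub>m n) = (mat_trace A) ^ n \<longleftrightarrow>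
           (\<forall>k<s. A $$ (k, k) = A $$ (0, 0)) \<and>
           (\<forall>i<s. \<forall>j<s. i \<noteq> j \<longrightarrow> A $$ (i, j) * A $$ (j, i) = 0)"
    proof
      assume eq: "real s ^ (n - 1) * mat_trace (A ^\<^sub>m n) = (mat_trace A) ^ n"
      then have eq': "real s * ((\<Sum>i<s. d i ^ 2) + Off) = (\<Sum>i<s. d i) ^ 2"
        using n2 tr2 T by simp
      have sO: "real s * Off \<ge> 0" using O0 by simp
      have "real s * Off + real s * (\<Sum>i<s. d i ^ 2) = (\<Sum>i<s. d i) ^ 2"
        using eq' by (simp add: distrib_left)
      then have "real s * Off = 0" using pm2 sO by linarith
      then have "Off = 0" using s by simp
      moreover have "real s ^ (2 - 1) * (\<Sum>i<s. d i ^ 2) = (\<Sum>i<s. d i) ^ 2"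
        using eq' \<open>Off = 0\<close> by simp
      ultimately show "(\<forall>k<s. A $$ (k, k) = A $$ (0, 0)) \<and>
           (\<forall>i<s. \<forall>j<s. i \<noteq> j \<longrightarrow> A $$ (i, j) * A $$ (j, i) = 0)"
      proof -
        have two: "(2::nat) \<ge> 2" by simp
        have alld: "\<forall>i<s. d i = d 0" using power_mean(2)[OF s two dnn] \<open>real s ^ (2 - 1) * (\<Sum>i<s. d i ^ 2) = (\<Sum>i<s. d i) ^ 2\<close> by blast
        have allp: "\<forall>i<s. \<forall>j<s. i \<noteq> j \<longrightarrow> p i j = 0" using Oiff \<open>Off = 0\<close> by blast
        show ?thesis using alld allp unfolding d_def p_def by blast
      qed
    next
      assume h: "(\<forall>k<s. A $$ (k, k) = A $$ (0, 0)) \<and>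
           (\<forall>i<s. \<forall>j<s. i \<noteq> j \<longrightarrow> A $$ (i, j) * A $$ (j, i) = 0)"
      then have "\<forall>i<s. \<forall>j<s. i \<noteq> j \<longrightarrow> p i j = 0" unfolding p_def by blast
      then have "Off = 0" using Oiff by blast
      have dc: "\<forall>i<s. d i = d 0" using h unfolding d_def by blast
      have "(\<Sum>i<s. d i ^ 2) = (\<Sum>i<s. d 0 ^ 2)" by (rule sum.cong[OF refl]) (metis dc lessThan_iff)
      moreover have "(\<Sum>i<s. d i) = (\<Sum>i<s. d 0)" by (rule sum.cong[OF refl]) (metis dc lessThan_iff)
      ultimately have "real s * ((\<Sum>i<s. d i ^ 2) + Off) = (\<Sum>i<s. d i) ^ 2"
        using \<open>Off = 0\<close> by (simp add: power2_eq_square)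
      then show "real s ^ (n - 1) * mat_trace (A ^\<^sub>m n) = (mat_trace A) ^ n"
        unfolding n2 tr2 T by simp
    qed
  qed
  show ?thesis using part1 part2 part3 by blast
qed

end
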